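(* Let $k,n$ be positive integers with $k\leqslant n$ and let $X\subseteq [n]^k_<$. Then $X$ is a matroid if and only if its barycentric subdivision $\mathcal{B}(X)\subseteq \mathrm{Conf}_k([n])$ is a Coxeter matroid.
   Context: $[n]:=\{1,\ldots,n\}$. $[n]^k_<$ denotes the set of $k$-element subsets of $[n]$, each identified with the increasing tuple $(x_1<\cdots<x_k)$ of its elements; $A+B:=(A\setminus B)\cup(B\setminus A)$. $X\subseteq[n]^k_<$ is a matroid if for all $A,B\in X$ and $a\in A\setminus B$ there exists $b\in B\setminus A$ with $A+\{a,b\}\in X$. $\mathrm{Conf}_k([n])$ is the set of $k$-tuples $(a_1,\ldots,a_k)$ of pairwise distinct elements of $[n]$. For $x\in\mathrm{Conf}_k([n])$ and $i\in[k]$, let $P^{(i)}(x)\in[n]^i_<$ be the increasing rearrangement of $\{x_1,\ldots,x_i\}$. The Bruhat order on $[n]^i_<$ is $u\leqslant v$ iff $u_j\leqslant v_j$ for all $j\in[i]$; the Bruhat order on $\mathrm{Conf}_k([n])$ is $x\leqslant y$ iff $P^{(i)}(x)\leqslant P^{(i)}(y)$ in $[n]^i_<$ for all $i\in[k]$ (this is the Bruhat order of the parabolic quotient $S_n^{\{k+1,\ldots,n-1\}}$ under the identification of $\mathrm{Conf}_k([n])$ with that quotient). The symmetric group $S_n$ acts on $\mathrm{Conf}_k([n])$ by $w\cdot(x_1,\ldots,x_k)=(w(x_1),\ldots,w(x_k))$. A subset $Y\subseteq\mathrm{Conf}_k([n])$ is a Coxeter matroid if for every $w\in S_n$ the set $\{w\cdot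 y: y\in Y\}$ has a unique maximal element (a maximum) in the Bruhat order of $\mathrm{Conf}_k([n])$. The barycentric subdivision of $X$ is $\mathcal{B}(X):=\{(x_{\sigma(1)},\ldots,x_{\sigma(k)}): x\in X,\ \sigma\in S_k\}\subseteq\mathrm{Conf}_k([n])$. *)

theory Defs
  imports "HOL-Combinatorics.Permutations"
begin

text \<open>[n]^k_<: k-element subsets of {1..n}; the increasing tuple of A is sorted_list_of_set A.\<close>
definition ksets :: "nat \<Rightarrow> nat \<Rightarrow> nat set set" where
  "ksets n k = {A. A \<subseteq> {1..n} \<and> card A = k}"

definition symdiff :: "nat set \<Rightarrow> nat set \<Rightarrow> nat set" where
  "symdiff A B = (A - B) \<union> (B - A)"

definition is_matroid :: "nat set set \<Rightarrow> bool" where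
  "is_matroid X \<longleftrightarrow> (\<forall>A\<in>X. \<forall>B\<in>X. \<forall>a\<in>A - B. \<exists>b\<in>B - A. symdiff A {a, b} \<in> X)"

definition conf :: "nat \<Rightarrow> nat \<Rightarrow> nat list set" where
  "conf k n = {x. length x = k \<and> distinct x \<and> set x \<subseteq> {1..n}}"

text \<open>P^(i)(x): increasing rearrangement of the first i entries, as a set.\<close>
definition P :: "nat \<Rightarrow> nat list \<Rightarrow> nat set" where
  "P i x = set (take i x)"

definition bruhat_set :: "nat \<Rightarrow> nat set \<Rightarrow> nat set \<Rightarrow> bool" where
  "bruhat_set i u v \<longleftrightarrow> (\<forall>j<i. sorted_list_of_set u ! j \<le> sorted_list_of_set v ! j)"

definition bruhat_conf :: "nat \<Rightarrow> nat list \<Rightarrow> nat list \<Rightarrow> bool" where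
  "bruhat_conf k x y \<longleftrightarrow> (\<forall>i\<in>{1..k}. bruhat_set i (P i x) (P i y))"

definition act :: "(nat \<Rightarrow> nat) \<Rightarrow> nat list \<Rightarrow> nat list" where
  "act w x = map w x"

definition is_maximum :: "nat \<Rightarrow> nat list set \<Rightarrow> nat list \<Rightarrow> bool" where
  "is_maximum k S m \<longleftrightarrow> m \<in> S \<and> (\<forall>y\<in>S. bruhat_conf k y m)"

definition coxeter_matroid :: "nat \<Rightarrow> nat \<Rightarrow> nat list set \<Rightarrow> bool" where
  "coxeter_matroid k n Y \<longleftrightarrow>
     (\<forall>w. w permutes {1..n} \<longrightarrow> (\<exists>!m. is_maximum k (act w ` Y) m))"

definition barycentric :: "nat \<Rightarrow> nat set set \<Rightarrow> nat list set" where
  "barycentric k X = {map (\<lambda>j. sorted_list_of_set A ! \<sigma> j) [0..<k] | A \<sigma>.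
                       A \<in> X \<and> \<sigma> permutes {0..<k}}"

end

theory Submission
  imports Defs
begin

lemma sl_facts:
  assumes "finite u" "card u = i"
  shows "length (sorted_list_of_set u) = i" "distinct (sorted_list_of_set u)"
        "sorted (sorted_list_of_set u)" "set (sorted_list_of_set u) = u"
  using assms by auto

lemma bruhat_imp_thr:
  assumes "finite u" "finite v" "card u = i" "card v = i" "bruhat_set i u v"
  shows "card (u \<inter> {c..}) \<le> card (v \<inter> {c..})"
proof -
  define su where "su = sorted_list_of_set u"
  define sv where "sv = sorted_list_of_set v"
  have lu: "length su = i" "distinct su" "set su = u" using assms unfolding su_def by auto
  have lv: "length sv = i" "distinct sv" "set sv = v" using assms unfolding sv_def by auto
  have le: "\<And>j. j < i \<Longrightarrow> su ! j \<le> sv ! j" using assms(5) unfolding bruhat_set_def su_def sv_def by auto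
  have e1: "u \<inter> {c..} = (\<lambda>l. su ! l) ` {l. l < i \<and> c \<le> su ! l}"
    using lu by (auto simp: in_set_conv_nth)
  have "card (u \<inter> {c..}) = card {l. l < i \<and> c \<le> su ! l}"
    unfolding e1 by (rule card_image) (use lu in \<open>auto simp: inj_on_def nth_eq_iff_index_eq\<close>)
  also have "\<dots> \<le> card {l. l < i \<and> c \<le> sv ! l}"
    by (rule card_mono) (use le in \<open>auto intro: order_trans\<close>)
  also have "\<dots> = card ((\<lambda>l. sv ! l) ` {l. l < i \<and> c \<le> sv ! l})"
    by (rule card_image[symmetric]) (use lv in \<open>auto simp: inj_on_def nth_eq_iff_index_eq\<close>)
  also have "\<dots> \<le> card (v \<inter> {c..})"
    by (rule card_mono) (use assms lv in \<open>auto\<close>)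
  finally show ?thesis .
qed

lemma thr_imp_bruhat:
  assumes "finite u" "finite v" "card u = i" "card v = i"
    and thr: "\<And>c. card (u \<inter> {c..}) \<le> card (v \<inter> {c..})"
  shows "bruhat_set i u v"
  unfolding bruhat_set_def
proof (intro allI impI, rule ccontr)
  fix j assume j: "j < i"
  define su where "su = sorted_list_of_set u"
  define sv where "sv = sorted_list_of_set v"
  have lu: "length su = i" "distinct su" "set su = u" "sorted su" using assms unfolding su_def by auto
  have lv: "length sv = i" "distinct sv" "set sv = v" "sorted sv" using assms unfolding sv_def by auto
  assume "\<not> sorted_list_of_set u ! j \<le> sorted_list_of_set v ! j"
  hence lt: "sv ! j < su ! j" unfolding su_def sv_def by simp
  define c where "c = su ! j"
  have "(\<lambda>l. su ! l) ` {j..<i} \<subseteq> u \<inter> {c..}"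
    using lu j by (auto simp: c_def sorted_nth_mono)
  hence "card ((\<lambda>l. su ! l) ` {j..<i}) \<le> card (u \<inter> {c..})"
    using assms by (intro card_mono) auto
  moreover have "card ((\<lambda>l. su ! l) ` {j..<i}) = i - j"
    by (subst card_image) (use lu in \<open>auto simp: inj_on_def nth_eq_iff_index_eq\<close>)
  moreover have "v \<inter> {c..} \<subseteq> (\<lambda>l. sv ! l) ` {j<..<i}"
  proof
    fix x assume x: "x \<in> v \<inter> {c..}"
    then obtain l where l: "l < i" "x = sv ! l" using lv by (auto simp: in_set_conv_nth)
    have "j < l"
    proof (rule ccontr)
      assume "\<not> j < l"
      hence "sv ! l \<le> sv ! j" using lv j by (intro sorted_nth_mono) auto
      thus False using x l lt c_def by auto
    qed
    thus "x \<in> (\<lambda>l. sv ! l) ` {j<..<i}" using l by auto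
  qed
  hence "card (v \<inter> {c..}) \<le> card ((\<lambda>l. sv ! l) ` {j<..<i})"
    by (intro card_mono) auto
  moreover have "card ((\<lambda>l. sv ! l) ` {j<..<i}) \<le> i - j - 1"
    using card_image_le[of "{j<..<i}" "\<lambda>l. sv ! l"] by simp
  ultimately show False using thr[of c] j by linarith
qed

lemma bruhat_antisym:
  assumes "finite u" "finite v" "card u = i" "card v = i" "bruhat_set i u v" "bruhat_set i v u"
  shows "u = v"
proof -
  have "sorted_list_of_set u = sorted_list_of_set v"
    by (rule nth_equalityI) (use assms in \<open>auto simp: bruhat_set_def intro: order_antisym\<close>)
  thus ?thesis using assms by (metis sorted_list_of_set.set_sorted_key_list_of_set)
qed

lemma take_diff:
  assumes "distinct x" "j < length x"
  shows "set (take (Suc j) x) - set (take j x) = {x ! j}"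
proof -
  have d: "distinct (take j x @ [x ! j])" using assms
    by (metis distinct_take take_Suc_conv_app_nth)
  show ?thesis using d assms by (auto simp: take_Suc_conv_app_nth)
qed


lemma max_unique:
  assumes S: "\<forall>x\<in>S. length x = k \<and> distinct x"
    and m1: "is_maximum k S m1" and m2: "is_maximum k S m2"
  shows "m1 = m2"
proof -
  have in1: "m1 \<in> S" and in2: "m2 \<in> S" using m1 m2 unfolding is_maximum_def by auto
  have b12: "bruhat_conf k m1 m2" and b21: "bruhat_conf k m2 m1"
    using m1 m2 in1 in2 unfolding is_maximum_def by auto
  have l1: "length m1 = k" "distinct m1" and l2: "length m2 = k" "distinct m2" using S in1 in2 by auto
  have eqP: "set (take i m1) = set (take i m2)" if "i \<le> k" for i
  proof (cases "i = 0")
    case True thus ?thesis by simp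
  next
    case False
    hence i: "i \<in> {1..k}" using that by auto
    have c1: "card (set (take i m1)) = i" using l1 that by (simp add: distinct_card)
    have c2: "card (set (take i m2)) = i" using l2 that by (simp add: distinct_card)
    show ?thesis
      by (rule bruhat_antisym[OF _ _ c1 c2])
         (use b12 b21 i in \<open>auto simp: bruhat_conf_def P_def\<close>)
  qed
  show ?thesis
  proof (rule nth_equalityI)
    show "length m1 = length m2" using l1 l2 by simp
    fix j assume "j < length m1"
    hence j: "j < k" using l1 by simp
    have "{m1 ! j} = {m2 ! j}"
      using take_diff[of m1 j] take_diff[of m2 j] l1 l2 j eqP[of j] eqP[of "Suc j"] by simp
    thus "m1 ! j = m2 ! j" by simp
  qed
qed

lemma bary_sub:
  assumes "X \<subseteq> ksets n k" "x \<in> barycentric k X"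
  shows "length x = k \<and> distinct x \<and> set x \<in> X"
proof -
  obtain A \<sigma> where A: "A \<in> X" "\<sigma> permutes {0..<k}" and x: "x = map (\<lambda>j. sorted_list_of_set A ! \<sigma> j) [0..<k]"
    using assms(2) unfolding barycentric_def by auto
  have fA: "finite A" "card A = k" using A assms(1) unfolding ksets_def by (auto intro: finite_subset)
  hence len: "length (sorted_list_of_set A) = k" by simp
  have xp: "x = permute_list \<sigma> (sorted_list_of_set A)"
    unfolding permute_list_def x len ..
  have p: "\<sigma> permutes {..<length (sorted_list_of_set A)}" using A len by (simp add: atLeast0LessThan)
  have ms: "mset x = mset (sorted_list_of_set A)" unfolding xp by (rule mset_permute_list[OF p])
  have "set x = A" using fA by (metis ms set_mset_mset sorted_list_of_set.set_sorted_key_list_of_set)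
  moreover have "distinct x" using fA ms
    by (metis distinct_sorted_list_of_set mset_eq_imp_distinct_iff)
  moreover have "length x = k" using xp len by simp
  ultimately show ?thesis using A by simp
qed

lemma bary_intro:
  assumes "X \<subseteq> ksets n k" "length x = k" "distinct x" "set x \<in> X"
  shows "x \<in> barycentric k X"
proof -
  define A where "A = set x"
  have fA: "finite A" "card A = k" using assms unfolding A_def by (auto simp: distinct_card)
  have ms: "mset x = mset (sorted_list_of_set A)"
    using assms(3) fA(1) unfolding A_def
    by (metis set_eq_iff_mset_eq_distinct distinct_sorted_list_of_set sorted_list_of_set.set_sorted_key_list_of_set)
  obtain p where p: "p permutes {..<length (sorted_list_of_set A)}" "permute_list p (sorted_list_of_set A) = x"
    using mset_eq_permutation[OF ms] by blast
  have len: "length (sorted_list_of_set A) = k" using fA by simp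
  have "x = map (\<lambda>j. sorted_list_of_set A ! p j) [0..<k]"
    using p(2) len unfolding permute_list_def by simp
  moreover have "p permutes {0..<k}" using p(1) len by (simp add: atLeast0LessThan)
  moreover have "A \<in> X" using assms(4) A_def by simp
  ultimately show ?thesis unfolding barycentric_def by blast
qed

lemma matroid_image:
  assumes "inj w" "is_matroid X"
  shows "is_matroid ((`) w ` X)"
  unfolding is_matroid_def
proof (intro ballI)
  fix A' B' a' assume "A' \<in> (`) w ` X" "B' \<in> (`) w ` X" and a': "a' \<in> A' - B'"
  then obtain A B where AB: "A \<in> X" "B \<in> X" "A' = w ` A" "B' = w ` B" by auto
  then obtain a where a: "a \<in> A - B" "a' = w a" using a' assms(1) by (auto simp: inj_image_mem_iff)
  then obtain b where b: "b \<in> B - A" "symdiff A {a, b} \<in> X"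
    using assms(2) AB unfolding is_matroid_def by blast
  have "w b \<in> B' - A'" using b AB assms(1) by (auto simp: inj_image_mem_iff)
  moreover have "symdiff A' {a', w b} = w ` symdiff A {a, b}"
    using AB a assms(1) unfolding symdiff_def by (simp add: image_Un image_set_diff[OF assms(1)])
  ultimately show "\<exists>b'\<in>B' - A'. symdiff A' {a', b'} \<in> (`) w ` X" using b by blast
qed


lemma gale_max_exists:
  assumes fin: "finite X" and ne: "X \<noteq> {}" and cardX: "\<forall>A\<in>X. finite A \<and> card A = k"
    and mat: "is_matroid X"
  shows "\<exists>M\<in>X. \<forall>B\<in>X. \<forall>c. card (B \<inter> {c..}) \<le> card (M \<inter> {c..})"
proof -
  obtain M where M: "M \<in> X" "\<forall>B\<in>X. \<Sum>B \<le> \<Sum>M"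
  proof -
    have "Max ((\<lambda>B. \<Sum>B) ` X) \<in> (\<lambda>B. \<Sum>B) ` X" using fin ne by (intro Max_in) auto
    then obtain M where "M \<in> X" "\<Sum>M = Max ((\<lambda>B. \<Sum>B) ` X)" by auto
    moreover have "\<forall>B\<in>X. \<Sum>B \<le> Max ((\<lambda>B. \<Sum>B) ` X)" using fin by auto
    ultimately show ?thesis using that by auto
  qed
  have fM: "finite M" "card M = k" using M cardX by auto
  have "\<forall>B\<in>X. \<forall>c. card (B \<inter> {c..}) \<le> card (M \<inter> {c..})"
  proof (intro ballI allI, rule ccontr)
    fix B0 c assume B0: "B0 \<in> X" and nB0: "\<not> card (B0 \<inter> {c..}) \<le> card (M \<inter> {c..})"
    define F where "F = {B\<in>X. card (M \<inter> {c..}) < card (B \<inter> {c..})}"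
    have B0F: "B0 \<in> F" using B0 nB0 unfolding F_def by auto
    have finF: "finite F" using fin unfolding F_def by auto
    obtain B where B: "B \<in> F" "\<forall>B'\<in>F. card (B' \<inter> M) \<le> card (B \<inter> M)"
    proof -
      have "Max ((\<lambda>B. card (B \<inter> M)) ` F) \<in> (\<lambda>B. card (B \<inter> M)) ` F" using finF B0F by (intro Max_in) auto
      then obtain B where "B \<in> F" "card (B \<inter> M) = Max ((\<lambda>B. card (B \<inter> M)) ` F)" by auto
      moreover have "\<forall>B'\<in>F. card (B' \<inter> M) \<le> Max ((\<lambda>B. card (B \<inter> M)) ` F)" using finF by auto
      ultimately show ?thesis using that by auto
    qed
    have BX: "B \<in> X" and Bc: "card (M \<inter> {c..}) < card (B \<inter> {c..})" using B(1) unfolding F_def by auto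
    have fB: "finite B" "card B = k" using BX cardX by auto
    have claim1: "\<forall>e\<in>B - M. c \<le> e"
    proof (rule ccontr)
      assume "\<not> (\<forall>e\<in>B - M. c \<le> e)"
      then obtain e where e: "e \<in> B" "e \<notin> M" "e < c" by auto
      then obtain b where b: "b \<in> M - B" "symdiff B {e, b} \<in> X"
        using mat BX M(1) unfolding is_matroid_def by blast
      have eq: "symdiff B {e, b} = insert b (B - {e})" using b e unfolding symdiff_def by auto
      have "B \<inter> {c..} \<subseteq> insert b (B - {e}) \<inter> {c..}" using e by auto
      hence "card (B \<inter> {c..}) \<le> card (insert b (B - {e}) \<inter> {c..})" using fB by (intro card_mono) auto
      hence inF: "insert b (B - {e}) \<in> F" using b eq Bc unfolding F_def by auto
      have "insert b (B - {e}) \<inter> M = insert b (B \<inter> M)" using b e by auto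
      hence "card (insert b (B - {e}) \<inter> M) = Suc (card (B \<inter> M))" using b fB by simp
      thus False using B(2) inF by fastforce
    qed
    have claim2: "\<exists>a\<in>M - B. a < c"
    proof (rule ccontr)
      assume "\<not> (\<exists>a\<in>M - B. a < c)"
      hence h: "\<forall>a\<in>M - B. c \<le> a" using not_less by blast
      have e1: "B \<inter> {c..} = (B \<inter> M \<inter> {c..}) \<union> (B - M)" using claim1 by auto
      have e2: "M \<inter> {c..} = (B \<inter> M \<inter> {c..}) \<union> (M - B)" using h by auto
      have "card (B \<inter> {c..}) = card (B \<inter> M \<inter> {c..}) + card (B - M)"
        unfolding e1 by (rule card_Un_disjoint) (use fB in auto)
      moreover have "card (M \<inter> {c..}) = card (B \<inter> M \<inter> {c..}) + card (M - B)"
        unfolding e2 by (rule card_Un_disjoint) (use fM in auto)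
      moreover have "card (B - M) = card (M - B)"
        using fB fM card_Diff_subset_Int[of "B \<inter> M" B] card_Diff_subset_Int[of "M \<inter> B" M]
        by (metis Diff_Int2 Diff_Int_distrib2 Int_commute card_Diff_subset_Int finite_Int inf.idem)
      ultimately show False using Bc by linarith
    qed
    then obtain a where a: "a \<in> M" "a \<notin> B" "a < c" by auto
    then obtain b where b: "b \<in> B - M" "symdiff M {a, b} \<in> X"
      using mat BX M(1) unfolding is_matroid_def by blast
    have "c \<le> b" using claim1 b by blast
    hence ab: "a < b" using a(3) by linarith
    have eq: "symdiff M {a, b} = insert b (M - {a})" using b a unfolding symdiff_def by auto
    have "\<Sum>(insert b (M - {a})) = b + \<Sum>(M - {a})" using b fM by simp
    moreover have "\<Sum>(M - {a}) + a = \<Sum>M" using a fM by (metis add.commute sum.remove)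
    ultimately have "\<Sum>M < \<Sum>(symdiff M {a, b})" using ab eq by simp
    thus False using M(2) b by fastforce
  qed
  thus ?thesis using M by blast
qed


lemma rev_sl_split:
  assumes "finite M" "u \<in> set (take i (rev (sorted_list_of_set M)))"
    "v \<in> set (drop i (rev (sorted_list_of_set M)))"
  shows "v < u"
proof -
  have "sorted_wrt (<) (sorted_list_of_set M)" by (rule strict_sorted_list_of_set)
  hence "sorted_wrt (>) (rev (sorted_list_of_set M))" by (simp add: sorted_wrt_rev)
  hence "sorted_wrt (>) (take i (rev (sorted_list_of_set M)) @ drop i (rev (sorted_list_of_set M)))"
    by simp
  thus ?thesis using assms(2,3) unfolding sorted_wrt_append by blast
qed

lemma greedy_prefix:
  assumes MX: "\<forall>B\<in>X. \<forall>c. card (B \<inter> {c..}) \<le> card (M \<inter> {c..})"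
    and fM: "finite M" and BX: "B \<in> X" and fB: "finite B" and SB: "S \<subseteq> B"
    and cS: "card S = i" and ik: "i \<le> card M"
  shows "card (S \<inter> {c..}) \<le> card (set (take i (rev (sorted_list_of_set M))) \<inter> {c..})"
proof -
  define T where "T = set (take i (rev (sorted_list_of_set M)))"
  have fS: "finite S" using SB fB by (rule finite_subset)
  have cT: "card T = i" unfolding T_def using fM ik
    by (simp add: distinct_card)
  have TM: "T \<subseteq> M" unfolding T_def using fM by (auto dest: in_set_takeD)
  show ?thesis
  proof (cases "T \<subseteq> {c..}")
    case True
    hence "T \<inter> {c..} = T" by auto
    moreover have "card (S \<inter> {c..}) \<le> i" using cS fS by (metis card_mono inf_le1)
    ultimately show ?thesis using cT T_def by simp
  next
    case False
    then obtain t where t: "t \<in> T" "t < c" using not_less by auto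
    have "M \<inter> {c..} \<subseteq> T \<inter> {c..}"
    proof
      fix m assume m: "m \<in> M \<inter> {c..}"
      have "m \<in> T"
      proof (rule ccontr)
        assume "m \<notin> T"
        have "m \<in> set (rev (sorted_list_of_set M))" using m fM by simp
        hence "m \<in> set (take i (rev (sorted_list_of_set M)) @ drop i (rev (sorted_list_of_set M)))"
          by simp
        hence "m \<in> set (drop i (rev (sorted_list_of_set M)))" using \<open>m \<notin> T\<close> unfolding T_def set_append
          by blast
        hence "m < t" using rev_sl_split[OF fM] t(1) unfolding T_def by blast
        thus False using m t by auto
      qed
      thus "m \<in> T \<inter> {c..}" using m by auto
    qed
    hence "card (M \<inter> {c..}) \<le> card (T \<inter> {c..})" unfolding T_def by (intro card_mono) auto
    moreover have "card (B \<inter> {c..}) \<le> card (M \<inter> {c..})" using MX BX by blast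
    moreover have "card (S \<inter> {c..}) \<le> card (B \<inter> {c..})" using SB fB by (intro card_mono) auto
    ultimately show ?thesis unfolding T_def by linarith
  qed
qed

lemma perm_exists:
  fixes n :: nat
  assumes "S1 \<subseteq> S2" "S2 \<subseteq> {1..n}"
  shows "\<exists>w. w permutes {1..n} \<and> (\<forall>s\<in>S1. \<forall>t\<in>{1..n} - S1. w t < w s)
             \<and> (\<forall>s\<in>S2. \<forall>t\<in>{1..n} - S2. w t < w s)"
proof -
  define key where "key x = (if x \<in> S1 then 2 * (n + 1) + x else if x \<in> S2 then (n + 1) + x else x)" for x
  define w0 where "w0 x = card {y\<in>{1..n}. key y \<le> key x}" for x
  define w where "w x = (if x \<in> {1..n} then w0 x else x)" for x
  have mono: "w0 x < w0 y" if "x \<in> {1..n}" "y \<in> {1..n}" "key x < key y" for x y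
  proof -
    have s1: "{z\<in>{1..n}. key z \<le> key x} \<subseteq> {z\<in>{1..n}. key z \<le> key y}"
      using that by auto
    have s2: "y \<in> {z\<in>{1..n}. key z \<le> key y}" "y \<notin> {z\<in>{1..n}. key z \<le> key x}"
      using that by auto
    have "{z\<in>{1..n}. key z \<le> key x} \<subset> {z\<in>{1..n}. key z \<le> key y}"
      using s1 s2 by blast
    thus ?thesis unfolding w0_def by (intro psubset_card_mono) auto
  qed
  have keyinj: "key x \<noteq> key y" if "x \<in> {1..n}" "y \<in> {1..n}" "x \<noteq> y" for x y
    using that unfolding key_def by (auto split: if_splits)
  have inj: "inj_on w0 {1..n}"
  proof (rule inj_onI, rule ccontr)
    fix x y assume xy: "x \<in> {1..n}" "y \<in> {1..n}" "w0 x = w0 y" "x \<noteq> y"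
    hence "key x < key y \<or> key y < key x" using keyinj by fastforce
    thus False using mono xy by fastforce
  qed
  have into: "w0 ` {1..n} \<subseteq> {1..n}"
  proof
    fix z assume "z \<in> w0 ` {1..n}"
    then obtain x where x: "x \<in> {1..n}" "z = w0 x" by auto
    have "x \<in> {y\<in>{1..n}. key y \<le> key x}" using x by auto
    moreover have "finite {y\<in>{1..n}. key y \<le> key x}" by simp
    ultimately have "0 < card {y\<in>{1..n}. key y \<le> key x}"
      using card_gt_0_iff by blast
    moreover have "card {y\<in>{1..n}. key y \<le> key x} \<le> card {1..n::nat}" by (intro card_mono) auto
    ultimately show "z \<in> {1..n}" using x unfolding w0_def by auto
  qed
  have "w0 ` {1..n} = {1..n}" using endo_inj_surj[OF _ into inj] by simp
  hence "bij_betw w0 {1..n} {1..n}" using inj by (simp add: bij_betw_def)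
  hence "bij_betw w {1..n} {1..n}" by (rule bij_betw_cong[THEN iffD1, rotated]) (simp add: w_def)
  hence perm: "w permutes {1..n}" by (rule bij_imp_permutes) (auto simp: w_def)
  have c1: "w t < w s" if "s \<in> S1" "t \<in> {1..n} - S1" for s t
  proof -
    have "s \<in> {1..n}" using that assms by auto
    moreover have "key t < key s" using that assms unfolding key_def by auto
    ultimately show ?thesis using mono that unfolding w_def by auto
  qed
  have c2: "w t < w s" if "s \<in> S2" "t \<in> {1..n} - S2" for s t
  proof -
    have "s \<in> {1..n}" using that assms by auto
    moreover have "key t < key s" using that assms unfolding key_def by auto
    ultimately show ?thesis using mono that unfolding w_def by auto
  qed
  show ?thesis using perm c1 c2 by blast
qed

lemma threshold_set:
  fixes n :: nat and w :: "nat \<Rightarrow> nat"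
  assumes w: "w permutes {1..n}" and U: "U \<subseteq> {1..n}" "U \<noteq> {}"
    and sep: "\<forall>s\<in>U. \<forall>t\<in>{1..n} - U. w t < w s"
  shows "\<exists>c. \<forall>Z. Z \<subseteq> {1..n} \<longrightarrow> card (Z \<inter> U) = card ((w ` Z) \<inter> {c..})"
proof -
  define c where "c = Min (w ` U)"
  have fU: "finite U" using U finite_subset by blast
  have "c \<in> w ` U" unfolding c_def using fU U by (intro Min_in) auto
  then obtain s0 where s0: "s0 \<in> U" "c = w s0" by auto
  have ge: "c \<le> w s" if "s \<in> U" for s unfolding c_def using fU that by simp
  have "card (Z \<inter> U) = card ((w ` Z) \<inter> {c..})" if Z: "Z \<subseteq> {1..n}" for Z
  proof -
    have "(w ` Z) \<inter> {c..} = w ` (Z \<inter> U)"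
    proof
      show "w ` (Z \<inter> U) \<subseteq> w ` Z \<inter> {c..}" using ge by auto
      show "w ` Z \<inter> {c..} \<subseteq> w ` (Z \<inter> U)"
      proof
        fix y assume "y \<in> w ` Z \<inter> {c..}"
        then obtain z where z: "z \<in> Z" "y = w z" "c \<le> w z" by auto
        have "z \<in> U"
        proof (rule ccontr)
          assume "z \<notin> U"
          hence "w z < w s0" using sep s0 z Z by blast
          thus False using z s0 by simp
        qed
        thus "y \<in> w ` (Z \<inter> U)" using z by auto
      qed
    qed
    moreover have "inj w" using w by (rule permutes_inj)
    ultimately show ?thesis by (simp add: card_image inj_on_subset)
  qed
  thus ?thesis by blast
qed


lemma act_bary_props:
  assumes "X \<subseteq> ksets n k" "w permutes {1..n}" "y \<in> act w ` barycentric k X"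
  shows "length y = k \<and> distinct y"
proof -
  obtain x where x: "x \<in> barycentric k X" "y = map w x" using assms(3) unfolding act_def by auto
  have "inj w" using assms(2) by (rule permutes_inj)
  hence "inj_on w (set x)" by (rule inj_on_subset) simp
  thus ?thesis using bary_sub[OF assms(1) x(1)] x(2) by (simp add: distinct_map)
qed

theorem theorem4p1:
  fixes n k :: nat and X :: "nat set set"
  assumes "0 < k" and "k \<le> n" and "X \<subseteq> ksets n k" and "X \<noteq> {}"
  shows "is_matroid X \<longleftrightarrow> coxeter_matroid k n (barycentric k X)"
proof
  have finX: "finite X"
  proof -
    have "X \<subseteq> Pow {1..n}" using assms(3) unfolding ksets_def by auto
    thus ?thesis by (rule finite_subset) simp
  qed
  have cardX: "finite A \<and> card A = k \<and> A \<subseteq> {1..n}" if "A \<in> X" for A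
    using assms(3) that unfolding ksets_def by (auto intro: finite_subset)
  {
    assume mat: "is_matroid X"
    show "coxeter_matroid k n (barycentric k X)"
      unfolding coxeter_matroid_def
    proof (intro allI impI)
      fix w assume w: "w permutes {1..n}"
      have injw: "inj w" using w by (rule permutes_inj)
      define Xw where "Xw = (`) w ` X"
      have finXw: "finite Xw" unfolding Xw_def using finX by simp
      have neXw: "Xw \<noteq> {}" unfolding Xw_def using assms(4) by simp
      have cardXw: "\<forall>A\<in>Xw. finite A \<and> card A = k"
        unfolding Xw_def using cardX injw by (auto simp: card_image inj_on_subset)
      have matw: "is_matroid Xw" unfolding Xw_def by (rule matroid_image[OF injw mat])
      obtain M where M: "M \<in> Xw" "\<forall>B\<in>Xw. \<forall>c. card (B \<inter> {c..}) \<le> card (M \<inter> {c..})"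
        using gale_max_exists[OF finXw neXw cardXw matw] by blast
      have fM: "finite M" "card M = k" using M(1) cardXw by auto
      obtain A where A: "A \<in> X" "M = w ` A" using M(1) unfolding Xw_def by auto
      define m where "m = rev (sorted_list_of_set M)"
      have lm: "length m = k" "distinct m" using fM unfolding m_def by auto
      have mem: "m \<in> act w ` barycentric k X"
      proof -
        define x where "x = map (inv w) m"
        have "inj (inv w)" using permutes_inv[OF w] by (rule permutes_inj)
        hence "inj_on (inv w) (set m)" by (rule inj_on_subset) simp
        hence dx: "distinct x" unfolding x_def using lm by (simp add: distinct_map)
        have sx: "set x = A" unfolding x_def m_def using fM A injw by (simp add: image_inv_f_f)
        have "x \<in> barycentric k X"
          using bary_intro[OF assms(3), of x] dx sx lm A(1) unfolding x_def by simp
        moreover have "act w x = m" unfolding act_def x_def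
          by (simp add: map_idI permutes_inverses(1)[OF w] comp_def)
        ultimately show ?thesis by force
      qed
      have bound: "bruhat_conf k y m" if y: "y \<in> act w ` barycentric k X" for y
      proof -
        obtain x where x: "x \<in> barycentric k X" "y = map w x" using y unfolding act_def by auto
        have xp: "length x = k" "distinct x" "set x \<in> X" using bary_sub[OF assms(3) x(1)] by auto
        have ly: "length y = k" "distinct y" using act_bary_props[OF assms(3) w y] by auto
        have yXw: "set y \<in> Xw" unfolding Xw_def x(2) using xp by simp
        show ?thesis unfolding bruhat_conf_def
        proof
          fix i assume i: "i \<in> {1..k}"
          have c1: "card (P i y) = i" unfolding P_def using ly i by (simp add: distinct_card)
          have c2: "card (P i m) = i" unfolding P_def using lm i by (simp add: distinct_card)
          show "bruhat_set i (P i y) (P i m)"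
          proof (rule thr_imp_bruhat[OF _ _ c1 c2])
            fix c
            show "card (P i y \<inter> {c..}) \<le> card (P i m \<inter> {c..})"
              unfolding P_def m_def
              by (rule greedy_prefix[OF M(2) fM(1) yXw])
                 (use c1 i fM in \<open>auto simp: P_def dest: in_set_takeD\<close>)
          qed (auto simp: P_def)
        qed
      qed
      have ismax: "is_maximum k (act w ` barycentric k X) m"
        unfolding is_maximum_def using mem bound by blast
      show "\<exists>!m. is_maximum k (act w ` barycentric k X) m"
      proof (rule ex1I[where P="is_maximum k (act w ` barycentric k X)", OF ismax])
        fix m' assume "is_maximum k (act w ` barycentric k X) m'"
        thus "m' = m" using max_unique[OF _ _ ismax] act_bary_props[OF assms(3) w] by blast
      qed
    qed
  }
  {
    assume cox: "coxeter_matroid k n (barycentric k X)"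
    show "is_matroid X"
    proof (rule ccontr)
      assume "\<not> is_matroid X"
      then obtain A B a where AB: "A \<in> X" "B \<in> X" and a: "a \<in> A" "a \<notin> B"
        and no: "\<forall>b\<in>B - A. symdiff A {a, b} \<notin> X"
        unfolding is_matroid_def by blast
      have fA: "finite A" "card A = k" "A \<subseteq> {1..n}" using cardX AB by auto
      have fB: "finite B" "card B = k" "B \<subseteq> {1..n}" using cardX AB by auto
      define S1 where "S1 = A - {a}"
      define S2 where "S2 = S1 \<union> (B - A)"
      have S12: "S1 \<subseteq> S2" "S2 \<subseteq> {1..n}" unfolding S2_def S1_def using fA fB by auto
      obtain w where w: "w permutes {1..n}" and sep1: "\<forall>s\<in>S1. \<forall>t\<in>{1..n} - S1. w t < w s"
        and sep2: "\<forall>s\<in>S2. \<forall>t\<in>{1..n} - S2. w t < w s"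
        using perm_exists[OF S12] by blast
      have injw: "inj w" using w by (rule permutes_inj)
      obtain m where m: "is_maximum k (act w ` barycentric k X) m"
        using cox w unfolding coxeter_matroid_def by blast
      then obtain x0 where x0: "x0 \<in> barycentric k X" "m = map w x0"
        unfolding is_maximum_def act_def by auto
      define A0 where "A0 = set x0"
      have x0p: "length x0 = k" "distinct x0" "A0 \<in> X" using bary_sub[OF assms(3) x0(1)] A0_def by auto
      have fA0: "finite A0" "card A0 = k" "A0 \<subseteq> {1..n}" using cardX x0p(3) by auto
      have thr: "card (w ` C \<inter> {c..}) \<le> card (w ` A0 \<inter> {c..})" if C: "C \<in> X" for C c
      proof -
        have fC: "finite C" "card C = k" using cardX C by auto
        define y where "y = sorted_list_of_set C"
        have y: "length y = k" "distinct y" "set y = C" using fC unfolding y_def by auto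
        have "y \<in> barycentric k X" using bary_intro[OF assms(3)] y C by simp
        hence "map w y \<in> act w ` barycentric k X" unfolding act_def by simp
        hence "bruhat_conf k (map w y) m" using m unfolding is_maximum_def by blast
        hence "bruhat_set k (P k (map w y)) (P k m)" unfolding bruhat_conf_def using assms(1) by auto
        hence b: "bruhat_set k (w ` C) (w ` A0)" unfolding P_def x0(2) A0_def using y x0p by simp
        show ?thesis
          by (rule bruhat_imp_thr[OF _ _ _ _ b]) (use fC fA0 injw in \<open>auto simp: card_image inj_on_subset\<close>)
      qed
      have S1A0: "S1 \<subseteq> A0"
      proof (cases "S1 = {}")
        case True thus ?thesis by simp
      next
        case False
        obtain c where c: "\<forall>Z. Z \<subseteq> {1..n} \<longrightarrow> card (Z \<inter> S1) = card ((w ` Z) \<inter> {c..})"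
          using threshold_set[OF w _ False sep1] S12 by blast
        have "card (A \<inter> S1) \<le> card (A0 \<inter> S1)" using c thr[OF AB(1), of c] fA fA0 by simp
        moreover have "A \<inter> S1 = S1" unfolding S1_def by auto
        ultimately have "card S1 \<le> card (A0 \<inter> S1)" by simp
        moreover have "finite S1" using fA unfolding S1_def by simp
        ultimately have "A0 \<inter> S1 = S1"
          by (metis card_seteq inf_le2)
        thus ?thesis by blast
      qed
      have BA: "B - A \<noteq> {}"
      proof
        assume "B - A = {}"
        hence "B \<subseteq> A" by blast
        hence "B = A" using fA fB by (metis card_subset_eq)
        thus False using a by simp
      qed
      have A0S2: "A0 \<subseteq> S2"
      proof -
        have ne: "S2 \<noteq> {}" using BA unfolding S2_def by blast
        obtain c where c: "\<forall>Z. Z \<subseteq> {1..n} \<longrightarrow> card (Z \<inter> S2) = card ((w ` Z) \<inter> {c..})"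
          using threshold_set[OF w S12(2) ne sep2] by blast
        have "card (B \<inter> S2) \<le> card (A0 \<inter> S2)" using c thr[OF AB(2), of c] fB fA0 by simp
        moreover have "B \<inter> S2 = B" unfolding S2_def S1_def using a by auto
        ultimately have "card A0 \<le> card (A0 \<inter> S2)" using fB fA0 by simp
        hence "A0 \<inter> S2 = A0" using fA0 by (metis card_seteq inf_le1)
        thus ?thesis by blast
      qed
      have cS1: "card S1 = k - 1" unfolding S1_def using fA a by simp
      have "A0 \<noteq> S1" using cS1 fA0 assms(1) by auto
      then obtain b where b: "b \<in> A0" "b \<notin> S1" using S1A0 by blast
      have bBA: "b \<in> B - A" using b A0S2 a unfolding S2_def S1_def by auto
      have "insert b S1 \<subseteq> A0" using b S1A0 by blast
      moreover have "card (insert b S1) = k" using cS1 b fA assms(1) unfolding S1_def by simp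
      ultimately have "insert b S1 = A0" using fA0 by (metis card_subset_eq)
      moreover have "symdiff A {a, b} = insert b S1"
        using a bBA unfolding symdiff_def S1_def by auto
      ultimately have "symdiff A {a, b} \<in> X" using x0p(3) by simp
      thus False using no bBA by blast
    qed
  }
qed

end
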